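(* Let $U\subset\mathbb{R}^n$ be an open set with coordinates $u^{i(\alpha)}$, $\alpha\in\{1,\dots,r\}$, $i\in\{1,\dots,m_\alpha\}$, where $n=m_1+\dots+m_r$, equipped with the commutative associative product $\circ$ with structure constants $c^{i(\alpha)}_{j(\beta)k(\gamma)}=\delta^\alpha_\beta\delta^\alpha_\gamma\delta^i_{j+k-1}$ and unit $e$ with components $e^{i(\alpha)}=\delta^i_1$. Let $X$ be a vector field on $U$ and let $\nabla$ be the torsionless connection on $U$ uniquely determined by the conditions $$\nabla_j e^i=0,\qquad c^i_{js}\nabla_kX^s-c^i_{ks}\nabla_jX^s=0,\qquad i,j,k\in\{1,\dots,n\}.$$ Let $Y$ be a vector field on $U$ satisfying $$(d_\nabla(Y\circ))^i_{jk}:=c^i_{js}\nabla_kY^s-c^i_{ks}\nabla_jY^s=0,\qquad i,j,k\in\{1,\dots,n\}.$$ Let $\mathbf{u}(x,t)=(u^1(x,t),\dots,u^n(x,t))$ be a (differentiable) function with values in $U$ satisfying the algebraic system $$x\,e^{i}+t\,X^{i}(\mathbf{u}(x,t))=Y^{i}(\mathbf{u}(x,t)),\qquad i\in\{1,\dots,n\}.$$ Then $\mathbf{u}(x,t)$ is a solution of the system of hydrodynamic type $$u^i_t=c^i_{jk}X^j(\mathbf{u})\,u^k_x,\qquad i\in\{1,\dots,n\}.$$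
   Context: Double-index notation: the index $i(\alpha)$ denotes the single index $m_1+\dots+m_{\alpha-1}+i$, and summation over repeated indices is understood. The coordinates are canonical (David–Hertling) coordinates of a regular F-manifold with Euler vector field, in which the Euler vector field has components $E^{i(\alpha)}=u^{i(\alpha)}$; in these coordinates the matrix $V^i_k=c^i_{jk}X^j$ is block-diagonal with $r$ blocks, the $\alpha$-th block being the $m_\alpha\times m_\alpha$ lower-triangular Toeplitz matrix with entries $V^{i(\alpha)}_{k(\alpha)}=X^{(i-k+1)(\alpha)}$ for $i\ge k$ and $0$ for $i<k$. The uniqueness of $\nabla$ holds under the standing assumptions that $X^{1(\alpha)}\neq X^{1(\beta)}$ for $\alpha\ne\beta$ and $X^{2(\alpha)}\neq 0$ for each $\alpha$. A vector field $Y$ with $d_\nabla(Y\circ)=0$ defines a symmetry $\mathbf{u}_\tau=Y\circ\mathbf{u}_x$ of the system. *)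

theory Defs
  imports "HOL-Analysis.Analysis"
begin

text \<open>Coordinates on R^n are indexed by a finite type 'n; the map blk sends a flat
index to its double index (alpha, i), both 0-based (so the paper's i(alpha) with
i in 1..m_alpha corresponds to blk k = (alpha-1, i-1)).\<close>

definition cstr :: "('n \<Rightarrow> nat \<times> nat) \<Rightarrow> 'n \<Rightarrow> 'n \<Rightarrow> 'n \<Rightarrow> real" where
  "cstr blk i j k =
     (if fst (blk j) = fst (blk i) \<and> fst (blk k) = fst (blk i)
         \<and> snd (blk i) = snd (blk j) + snd (blk k) then 1 else 0)"
  \<comment> \<open>c^i_{jk} = delta^alpha_beta delta^alpha_gamma delta^i_{j+k-1} (1-based), i.e. i = j + k 0-based\<close>

definition unit_e :: "('n \<Rightarrow> nat \<times> nat) \<Rightarrow> real ^ 'n" where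
  "unit_e blk = (\<chi> i. if snd (blk i) = 0 then 1 else 0)"

definition pd :: "(real ^ 'n \<Rightarrow> real ^ 'n) \<Rightarrow> 'n \<Rightarrow> real ^ 'n \<Rightarrow> real ^ 'n" where
  "pd F j p = frechet_derivative F (at p) (axis j 1)"

text \<open>Covariant derivative nabla_j F^i = d_j F^i + Gamma^i_{jk} F^k,
  with Gamma p i j k = Gamma^i_{jk}(p).\<close>
definition cov :: "(real ^ 'n \<Rightarrow> 'n \<Rightarrow> 'n \<Rightarrow> 'n \<Rightarrow> real) \<Rightarrow> (real ^ 'n \<Rightarrow> real ^ 'n)
     \<Rightarrow> real ^ 'n \<Rightarrow> 'n \<Rightarrow> 'n \<Rightarrow> real" where
  "cov \<Gamma> F p j i = pd F j p $ i + (\<Sum>k\<in>UNIV. \<Gamma> p i j k * F p $ k)"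

definition dnabla :: "('n \<Rightarrow> nat \<times> nat) \<Rightarrow> (real ^ 'n \<Rightarrow> 'n \<Rightarrow> 'n \<Rightarrow> 'n \<Rightarrow> real)
     \<Rightarrow> (real ^ 'n \<Rightarrow> real ^ 'n) \<Rightarrow> real ^ 'n \<Rightarrow> 'n \<Rightarrow> 'n \<Rightarrow> 'n \<Rightarrow> real" where
  "dnabla blk \<Gamma> F p i j k =
     (\<Sum>s\<in>UNIV. cstr blk i j s * cov \<Gamma> F p k s - cstr blk i k s * cov \<Gamma> F p j s)"

end

theory Submission imports Defs begin

definition cm :: "('n::finite \<Rightarrow> nat \<times> nat) \<Rightarrow> real^'n \<Rightarrow> real^'n \<Rightarrow> real^'n" where
  "cm blk a b = (\<chi> i. \<Sum>j\<in>UNIV. \<Sum>k\<in>UNIV. cstr blk i j k * a$j * b$k)"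

lemma sum_ind:
  fixes blk :: "'n::finite \<Rightarrow> nat \<times> nat"
  assumes "inj blk" "blk l0 = p"
  shows "(\<Sum>l\<in>UNIV. if blk l = p \<and> Q then (1::real) else 0) = (if Q then 1 else 0)"
proof -
  have "\<And>l. (blk l = p \<and> Q) = (l = l0 \<and> Q)" using assms by (metis injD)
  then have "(\<Sum>l\<in>UNIV. if blk l = p \<and> Q then (1::real) else 0) = (\<Sum>l\<in>UNIV. if l = l0 then (if Q then 1 else 0) else 0)"
    by (intro sum.cong) auto
  also have "\<dots> = (if Q then 1 else 0)" by simp
  finally show ?thesis .
qed

lemma swap3: "(\<Sum>a\<in>A. \<Sum>b\<in>B. \<Sum>c\<in>C. f a b c) = (\<Sum>b\<in>B. \<Sum>c\<in>C. \<Sum>a\<in>A. f a b c)"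
  apply (rule trans[OF sum.swap])
  apply (rule sum.cong[OF refl])
  apply (rule sum.swap)
  done

lemma swap4: "(\<Sum>a\<in>A. \<Sum>b\<in>B. \<Sum>c\<in>C. \<Sum>d\<in>E. f a b c d) = (\<Sum>b\<in>B. \<Sum>c\<in>C. \<Sum>d\<in>E. \<Sum>a\<in>A. f a b c d)"
  apply (rule trans[OF sum.swap])
  apply (rule sum.cong[OF refl])
  apply (rule swap3)
  done

locale blkloc =
  fixes blk :: "'n::finite \<Rightarrow> nat \<times> nat" and r :: nat and m :: "nat \<Rightarrow> nat"
  assumes bij: "bij_betw blk UNIV {(a, i). a < r \<and> i < m a}"
begin

lemma injb: "inj blk" using bij bij_betw_def by blast

lemma inS: "fst (blk i) < r \<and> snd (blk i) < m (fst (blk i))"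
proof -
  have "blk i \<in> range blk" by simp
  then show ?thesis using bij unfolding bij_betw_def by auto
qed

lemma ex: "a < r \<Longrightarrow> n < m a \<Longrightarrow> \<exists>l. blk l = (a, n)"
  using bij unfolding bij_betw_def by (metis (mono_tags, lifting) case_prodI imageE mem_Collect_eq)

definition ind3 :: "'n \<Rightarrow> 'n \<Rightarrow> 'n \<Rightarrow> 'n \<Rightarrow> real" where
  "ind3 i j j' k = (if fst (blk j) = fst (blk i) \<and> fst (blk j') = fst (blk i) \<and> fst (blk k) = fst (blk i)
      \<and> snd (blk i) = snd (blk j) + snd (blk j') + snd (blk k) then 1 else 0)"

lemma K1: "(\<Sum>l\<in>UNIV. cstr blk i l k * cstr blk l j j') = ind3 i j j' k"
proof (cases "fst (blk j) = fst (blk i) \<and> fst (blk j') = fst (blk i) \<and> fst (blk k) = fst (blk i)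
      \<and> snd (blk i) = snd (blk j) + snd (blk j') + snd (blk k)")
  case True
  obtain l0 where l0: "blk l0 = (fst (blk i), snd (blk j) + snd (blk j'))"
    using ex inS True by (metis add_leD1 le_add1 order_le_less_trans)
  have "(\<Sum>l\<in>UNIV. cstr blk i l k * cstr blk l j j') = (\<Sum>l\<in>UNIV. if blk l = (fst (blk i), snd (blk j) + snd (blk j')) \<and> True then 1 else 0)"
    using True by (intro sum.cong) (auto simp: cstr_def prod_eq_iff)
  also have "\<dots> = 1" using sum_ind[OF injb l0, of True] by simp
  finally show ?thesis using True by (simp add: ind3_def)
next
  case False
  then have Z: "cstr blk i l k * cstr blk l j j' = 0" for l by (auto simp: cstr_def)
  have "(\<Sum>l\<in>UNIV. cstr blk i l k * cstr blk l j j') = 0" by (simp only: Z sum.neutral_const)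
  then show ?thesis using False by (simp add: ind3_def)
qed

lemma K2: "(\<Sum>l\<in>UNIV. cstr blk i j l * cstr blk l j' k) = ind3 i j j' k"
proof (cases "fst (blk j) = fst (blk i) \<and> fst (blk j') = fst (blk i) \<and> fst (blk k) = fst (blk i)
      \<and> snd (blk i) = snd (blk j) + snd (blk j') + snd (blk k)")
  case True
  obtain l0 where l0: "blk l0 = (fst (blk i), snd (blk j') + snd (blk k))"
    using ex inS True by (metis add_leD1 le_add2 order_le_less_trans add.assoc)
  have "(\<Sum>l\<in>UNIV. cstr blk i j l * cstr blk l j' k) = (\<Sum>l\<in>UNIV. if blk l = (fst (blk i), snd (blk j') + snd (blk k)) \<and> True then 1 else 0)"
    using True by (intro sum.cong) (auto simp: cstr_def prod_eq_iff)
  also have "\<dots> = 1" using sum_ind[OF injb l0, of True] by simp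
  finally show ?thesis using True by (simp add: ind3_def)
next
  case False
  then have Z: "cstr blk i j l * cstr blk l j' k = 0" for l by (auto simp: cstr_def)
  have "(\<Sum>l\<in>UNIV. cstr blk i j l * cstr blk l j' k) = 0" by (simp only: Z sum.neutral_const)
  then show ?thesis using False by (simp add: ind3_def)
qed

lemma comm: "cm blk a b = cm blk b a"
proof -
  have "cstr blk i j k = cstr blk i k j" for i j k by (auto simp: cstr_def)
  then show ?thesis unfolding cm_def
    by (subst sum.swap) (simp add: mult_ac)
qed

lemma assoc: "cm blk (cm blk a b) c = cm blk a (cm blk b c)"
proof -
  have "(cm blk (cm blk a b) c)$i = (cm blk a (cm blk b c))$i" for i
  proof -
    have "(cm blk (cm blk a b) c)$i = (\<Sum>l\<in>UNIV. \<Sum>k\<in>UNIV. \<Sum>j\<in>UNIV. \<Sum>j'\<in>UNIV.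
            (cstr blk i l k * cstr blk l j j') * (a$j * b$j' * c$k))"
      unfolding cm_def by (simp add: sum_distrib_left sum_distrib_right mult_ac)
    also have "\<dots> = (\<Sum>k\<in>UNIV. \<Sum>j\<in>UNIV. \<Sum>j'\<in>UNIV. \<Sum>l\<in>UNIV.
            (cstr blk i l k * cstr blk l j j') * (a$j * b$j' * c$k))"
      by (rule swap4)
    also have "\<dots> = (\<Sum>k\<in>UNIV. \<Sum>j\<in>UNIV. \<Sum>j'\<in>UNIV. ind3 i j j' k * (a$j * b$j' * c$k))"
      by (simp add: sum_distrib_right[symmetric] K1)
    finally have L: "(cm blk (cm blk a b) c)$i = (\<Sum>k\<in>UNIV. \<Sum>j\<in>UNIV. \<Sum>j'\<in>UNIV. ind3 i j j' k * (a$j * b$j' * c$k))" .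
    have "(cm blk a (cm blk b c))$i = (\<Sum>j\<in>UNIV. \<Sum>l\<in>UNIV. \<Sum>j'\<in>UNIV. \<Sum>k\<in>UNIV.
            (cstr blk i j l * cstr blk l j' k) * (a$j * b$j' * c$k))"
      unfolding cm_def by (simp add: sum_distrib_left sum_distrib_right mult_ac)
    also have "\<dots> = (\<Sum>j\<in>UNIV. \<Sum>j'\<in>UNIV. \<Sum>k\<in>UNIV. \<Sum>l\<in>UNIV.
            (cstr blk i j l * cstr blk l j' k) * (a$j * b$j' * c$k))"
      by (rule sum.cong[OF refl], rule swap3)
    also have "\<dots> = (\<Sum>j\<in>UNIV. \<Sum>j'\<in>UNIV. \<Sum>k\<in>UNIV. ind3 i j j' k * (a$j * b$j' * c$k))"
      by (simp add: sum_distrib_right[symmetric] K2)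
    also have "\<dots> = (\<Sum>k\<in>UNIV. \<Sum>j\<in>UNIV. \<Sum>j'\<in>UNIV. ind3 i j j' k * (a$j * b$j' * c$k))"
      by (rule swap3[symmetric])
    finally show ?thesis using L by simp
  qed
  then show ?thesis by (simp add: vec_eq_iff)
qed

lemma unit_sum: "(\<Sum>j\<in>UNIV. cstr blk i j s * unit_e blk $ j) = (if s = i then 1 else 0)"
proof (cases "s = i")
  case True
  obtain l0 where l0: "blk l0 = (fst (blk i), 0)" using ex inS by (metis gr_zeroI not_less0)
  have "(\<Sum>j\<in>UNIV. cstr blk i j s * unit_e blk $ j) = (\<Sum>j\<in>UNIV. if blk j = (fst (blk i), 0) \<and> True then 1 else 0)"
    using True by (intro sum.cong) (auto simp: cstr_def unit_e_def prod_eq_iff)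
  also have "\<dots> = 1" using sum_ind[OF injb l0, of True] by simp
  finally show ?thesis using True by simp
next
  case False
  have ne: "blk s \<noteq> blk i" using False injb by (metis injD)
  have Z: "cstr blk i j s * unit_e blk $ j = 0" for j using ne
    by (auto simp: cstr_def unit_e_def prod_eq_iff)
  have "(\<Sum>j\<in>UNIV. cstr blk i j s * unit_e blk $ j) = 0" by (simp only: Z sum.neutral_const)
  then show ?thesis using False by simp
qed

lemma unitl: "cm blk (unit_e blk) a = a"
proof -
  have "(cm blk (unit_e blk) a)$i = a$i" for i
  proof -
    have "(cm blk (unit_e blk) a)$i = (\<Sum>k\<in>UNIV. (\<Sum>j\<in>UNIV. cstr blk i j k * unit_e blk $ j) * a$k)"
      unfolding cm_def vec_lambda_beta sum_distrib_right by (rule sum.swap)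
    also have "\<dots> = (\<Sum>k\<in>UNIV. if k = i then a$k else 0)"
      by (intro sum.cong) (auto simp: unit_sum)
    also have "\<dots> = a$i" by simp
    finally show ?thesis .
  qed
  then show ?thesis by (simp add: vec_eq_iff)
qed

lemma nab:
  assumes "\<forall>j. (\<Sum>s\<in>UNIV. cstr blk i j s * C k s - cstr blk i k s * C j s) = 0"
  shows "C k i = (\<Sum>s\<in>UNIV. cstr blk i k s * (\<Sum>j\<in>UNIV. unit_e blk $ j * C j s))"
proof -
  have "0 = (\<Sum>j\<in>UNIV. unit_e blk $ j * (\<Sum>s\<in>UNIV. cstr blk i j s * C k s - cstr blk i k s * C j s))"
    using assms by simp
  also have "\<dots> = (\<Sum>j\<in>UNIV. \<Sum>s\<in>UNIV. cstr blk i j s * unit_e blk $ j * C k s)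
       - (\<Sum>j\<in>UNIV. \<Sum>s\<in>UNIV. cstr blk i k s * (unit_e blk $ j * C j s))"
    by (simp add: sum_distrib_left right_diff_distrib sum_subtractf mult_ac)
  also have "(\<Sum>j\<in>UNIV. \<Sum>s\<in>UNIV. cstr blk i j s * unit_e blk $ j * C k s)
      = (\<Sum>s\<in>UNIV. (\<Sum>j\<in>UNIV. cstr blk i j s * unit_e blk $ j) * C k s)"
    by (subst sum.swap) (simp add: sum_distrib_right)
  also have "\<dots> = (\<Sum>s\<in>UNIV. if s = i then C k s else 0)"
    by (intro sum.cong) (auto simp: unit_sum)
  also have "\<dots> = C k i" by simp
  also have "(\<Sum>j\<in>UNIV. \<Sum>s\<in>UNIV. cstr blk i k s * (unit_e blk $ j * C j s))
      = (\<Sum>s\<in>UNIV. cstr blk i k s * (\<Sum>j\<in>UNIV. unit_e blk $ j * C j s))"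
    by (subst sum.swap) (simp add: sum_distrib_left)
  finally show ?thesis by simp
qed

end

lemma lin_comp:
  fixes f :: "real^'n::finite \<Rightarrow> real^'n"
  assumes "linear f"
  shows "f w $ i = (\<Sum>k\<in>UNIV. w$k * f (axis k 1) $ i)"
proof -
  have "w = (\<Sum>k\<in>UNIV. w$k *\<^sub>R axis k 1)"
    using basis_expansion[of w] by (simp add: scalar_mult_eq_scaleR)
  then have "f w = (\<Sum>k\<in>UNIV. w$k *\<^sub>R f (axis k 1))"
    using assms by (metis (no_types, lifting) linear_scale linear_sum sum.cong comp_apply)
  then show ?thesis by simp
qed

lemma pd_const: "pd (\<lambda>_. c) j p = 0"
proof -
  have "frechet_derivative (\<lambda>_. c) (at p) = (\<lambda>h. 0)"
    by (rule frechet_derivative_at[symmetric]) (rule has_derivative_const)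
  then show ?thesis by (simp add: pd_def)
qed

theorem theorem2p1:
  fixes r :: nat and m :: "nat \<Rightarrow> nat" and blk :: "'n::finite \<Rightarrow> nat \<times> nat"
    and U :: "(real ^ 'n) set" and X Y :: "real ^ 'n \<Rightarrow> real ^ 'n"
    and \<Gamma> :: "real ^ 'n \<Rightarrow> 'n \<Rightarrow> 'n \<Rightarrow> 'n \<Rightarrow> real"
    and D :: "(real \<times> real) set" and u :: "real \<times> real \<Rightarrow> real ^ 'n"
  assumes blocks: "\<forall>a<r. 0 < m a"
    and blk: "bij_betw blk UNIV {(a, i). a < r \<and> i < m a}"
    and U_open: "open U"
    and X_diff: "\<forall>p\<in>U. X differentiable (at p)"
    and Y_diff: "\<forall>p\<in>U. Y differentiable (at p)"
    and torsionless: "\<forall>p\<in>U. \<forall>i j k. \<Gamma> p i j k = \<Gamma> p i k j"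
    and nabla_e: "\<forall>p\<in>U. \<forall>i j. cov \<Gamma> (\<lambda>_. unit_e blk) p j i = 0"
    and nabla_X: "\<forall>p\<in>U. \<forall>i j k. dnabla blk \<Gamma> X p i j k = 0"
    and nabla_Y: "\<forall>p\<in>U. \<forall>i j k. dnabla blk \<Gamma> Y p i j k = 0"
    and D_open: "open D"
    and u_in: "\<forall>z\<in>D. u z \<in> U"
    and u_diff: "\<forall>z\<in>D. u differentiable (at z)"
    and hodograph: "\<forall>x t. (x, t) \<in> D \<longrightarrow> x *\<^sub>R unit_e blk + t *\<^sub>R X (u (x, t)) = Y (u (x, t))"
  shows "\<forall>x t. (x, t) \<in> D \<longrightarrow> (\<forall>i.
           frechet_derivative u (at (x, t)) (0, 1) $ i =
           (\<Sum>j\<in>UNIV. \<Sum>k\<in>UNIV. cstr blk i j k * X (u (x, t)) $ j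
                              * frechet_derivative u (at (x, t)) (1, 0) $ k))"
  proof -
  interpret B: blkloc blk r m using blk by unfold_locales
  show ?thesis
  proof (intro allI impI)
    fix x t i assume zD: "(x, t) \<in> D"
    define z where "z = (x, t)"
    define p where "p = u z"
    define e where "e = unit_e blk"
    have pU: "p \<in> U" using u_in zD by (simp add: p_def z_def)
    define u' where "u' = frechet_derivative u (at z)"
    have du: "(u has_derivative u') (at z)" using u_diff zD frechet_derivative_works
      by (auto simp: u'_def z_def)
    define X' where "X' = frechet_derivative X (at p)"
    have dX: "(X has_derivative X') (at p)" using X_diff pU frechet_derivative_works
      by (auto simp: X'_def)
    define Y' where "Y' = frechet_derivative Y (at p)"
    have dY: "(Y has_derivative Y') (at p)" using Y_diff pU frechet_derivative_works
      by (auto simp: Y'_def)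
    have dXu: "((\<lambda>w. X (u w)) has_derivative (\<lambda>h. X' (u' h))) (at z)"
      using diff_chain_at[OF du dX[unfolded p_def]] by (simp add: o_def)
    have dYu: "((\<lambda>w. Y (u w)) has_derivative (\<lambda>h. Y' (u' h))) (at z)"
      using diff_chain_at[OF du dY[unfolded p_def]] by (simp add: o_def)
    have dfe: "((\<lambda>w. fst w *\<^sub>R e) has_derivative (\<lambda>h. fst h *\<^sub>R e)) (at z)"
      by (rule bounded_linear_imp_has_derivative)
        (intro bounded_linear_compose[OF bounded_linear_scaleR_left bounded_linear_fst])
    have dG: "((\<lambda>w. fst w *\<^sub>R e + snd w *\<^sub>R X (u w) - Y (u w)) has_derivative
        (\<lambda>h. fst h *\<^sub>R e + (snd z *\<^sub>R X' (u' h) + snd h *\<^sub>R X (u z)) - Y' (u' h))) (at z)"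
      by (intro has_derivative_diff has_derivative_add has_derivative_scaleR has_derivative_fst dfe
          has_derivative_snd has_derivative_ident has_derivative_const dXu dYu)
    have dG0: "((\<lambda>w. fst w *\<^sub>R e + snd w *\<^sub>R X (u w) - Y (u w)) has_derivative (\<lambda>h. 0)) (at z)"
    proof (rule has_derivative_transform_within_open[OF has_derivative_const D_open])
      show "z \<in> D" using zD by (simp add: z_def)
      fix w assume "w \<in> D"
      then show "0 = fst w *\<^sub>R e + snd w *\<^sub>R X (u w) - Y (u w)"
        using hodograph[rule_format, of "fst w" "snd w"] by (simp add: e_def)
    qed
    have G0: "(\<lambda>h. fst h *\<^sub>R e + (snd z *\<^sub>R X' (u' h) + snd h *\<^sub>R X (u z)) - Y' (u' h)) = (\<lambda>h. 0)"
      using has_derivative_unique[OF dG dG0] .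
    define ux where "ux = u' (1, 0)"
    define ut where "ut = u' (0, 1)"
    have h1: "e + t *\<^sub>R X' ux - Y' ux = 0"
      using fun_cong[OF G0, of "(1,0)"] by (simp add: ux_def z_def)
    have h2: "t *\<^sub>R X' ut + X p - Y' ut = 0"
      using fun_cong[OF G0, of "(0,1)"] by (simp add: ut_def z_def p_def)
    have linX: "linear X'" using dX by (rule has_derivative_linear)
    have linY: "linear Y'" using dY by (rule has_derivative_linear)
    define bX where "bX = (\<lambda>s. \<Sum>j\<in>UNIV. unit_e blk $ j * cov \<Gamma> X p j s)"
    define bY where "bY = (\<lambda>s. \<Sum>j\<in>UNIV. unit_e blk $ j * cov \<Gamma> Y p j s)"
    define a where "a = (\<chi> s. bY s - t * bX s)"
    have covX: "cov \<Gamma> X p k l = (\<Sum>s\<in>UNIV. cstr blk l k s * bX s)" for k l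
      unfolding bX_def
      by (rule B.nab) (use nabla_X pU in \<open>simp add: dnabla_def\<close>)
    have covY: "cov \<Gamma> Y p k l = (\<Sum>s\<in>UNIV. cstr blk l k s * bY s)" for k l
      unfolding bY_def
      by (rule B.nab) (use nabla_Y pU in \<open>simp add: dnabla_def\<close>)
    have gam: "(\<Sum>l\<in>UNIV. \<Gamma> p j k l * e $ l) = 0" for j k
      using nabla_e pU by (simp add: cov_def pd_const e_def)
    have Yp: "Y p = x *\<^sub>R e + t *\<^sub>R X p"
      using hodograph zD by (simp add: p_def z_def e_def)
    have Dk: "pd Y k p $ l - t * pd X k p $ l = (\<Sum>s\<in>UNIV. cstr blk l k s * a $ s)" for k l
    proof -
      have "(\<Sum>q\<in>UNIV. \<Gamma> p l k q * Y p $ q) = x * (\<Sum>q\<in>UNIV. \<Gamma> p l k q * e $ q) + t * (\<Sum>q\<in>UNIV. \<Gamma> p l k q * X p $ q)"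
        by (simp add: Yp sum_distrib_left sum.distrib algebra_simps)
      then have "(\<Sum>q\<in>UNIV. \<Gamma> p l k q * Y p $ q) = t * (\<Sum>q\<in>UNIV. \<Gamma> p l k q * X p $ q)"
        using gam by simp
      then have "pd Y k p $ l - t * pd X k p $ l = cov \<Gamma> Y p k l - t * cov \<Gamma> X p k l"
        by (simp add: cov_def algebra_simps)
      also have "\<dots> = (\<Sum>s\<in>UNIV. cstr blk l k s * a $ s)"
        by (simp add: covX covY a_def sum_distrib_left sum_subtractf algebra_simps)
      finally show ?thesis .
    qed
    have pdX: "pd X k p = X' (axis k 1)" for k by (simp add: pd_def X'_def)
    have pdY: "pd Y k p = Y' (axis k 1)" for k by (simp add: pd_def Y'_def)
    have comp: "Y' w $ l - t * X' w $ l = (cm blk w a) $ l" for w l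
    proof -
      have "Y' w $ l - t * X' w $ l = (\<Sum>k\<in>UNIV. w$k * (pd Y k p $ l - t * pd X k p $ l))"
        by (simp add: lin_comp[OF linY, of w] lin_comp[OF linX, of w] pdX pdY
            sum_distrib_left sum_subtractf algebra_simps)
      also have "\<dots> = (cm blk w a) $ l"
        by (simp add: Dk cm_def sum_distrib_left mult_ac)
      finally show ?thesis .
    qed
    have E1: "cm blk ux a = e"
      using h1 comp[of ux] by (simp add: vec_eq_iff algebra_simps)
    have E2: "cm blk ut a = X p"
      using h2 comp[of ut] by (simp add: vec_eq_iff algebra_simps)
    have "ut = cm blk e ut" by (simp add: e_def B.unitl)
    also have "\<dots> = cm blk ux (cm blk a ut)" by (simp add: E1[symmetric] B.assoc)
    also have "\<dots> = cm blk (X p) ux" by (simp add: B.comm[of a ut] E2 B.comm[of ux])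
    finally have "ut $ i = cm blk (X p) ux $ i" by simp
    then show "frechet_derivative u (at (x, t)) (0, 1) $ i =
           (\<Sum>j\<in>UNIV. \<Sum>k\<in>UNIV. cstr blk i j k * X (u (x, t)) $ j
                              * frechet_derivative u (at (x, t)) (1, 0) $ k)"
      by (simp add: ut_def ux_def u'_def z_def p_def cm_def)
  qed
qed

end
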